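(* Let $S\in V_{\mathrm{gen}}$ and let $e\in\mathfrak g_1$ be such that the orthogonal projection of $e$ onto each eigenspace of $S^2$ is nonzero. Let $N$ be the number of distinct eigenvalues of $S^2$. For all $T\in V$, if $TS^je=0$ for $j=0,\dots,2N-1$, then $T=0$.
   Context: $\mathfrak g=\mathfrak g_1\oplus\mathfrak g_2$ is the Lie algebra of a $2$-step stratified group ($[\mathfrak g_1,\mathfrak g_1]=\mathfrak g_2\ne\{0\}$, $[\mathfrak g,\mathfrak g_2]=0$), and $\langle\cdot,\cdot\rangle$ is an inner product on $\mathfrak g_1$. For $\mu\in\mathfrak g_2^*$, $J_\mu$ is the skew-symmetric endomorphism of $\mathfrak g_1$ with $\langle J_\mu x,x'\rangle=\mu([x,x'])$. $V=\{J_\mu:\mu\in\mathfrak g_2^*\}$, a linear subspace of the skew-symmetric endomorphisms of $\mathfrak g_1$, and $V_{\mathrm{gen}}$ is the set of elements of $V$ having the maximal number of distinct eigenvalues among elements of $V$. *)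

theory Defs
  imports "HOL-Analysis.Analysis"
begin

text \<open>The first layer g1 is a Euclidean space 'a (its inner product is the given one),
the second layer g2 is a Euclidean space 'b, and the Lie bracket restricted to g1 x g1
is a bilinear skew-symmetric map br. Since the group is 2-step, g2 is central and this
is all of the bracket.\<close>

definition two_step_bracket :: "('a::euclidean_space \<Rightarrow> 'a \<Rightarrow> 'b::euclidean_space) \<Rightarrow> bool" where
  "two_step_bracket br \<longleftrightarrow> bilinear br \<and> (\<forall>x y. br x y = - br y x)
     \<and> span (range (\<lambda>(x, y). br x y)) = UNIV"

text \<open>J_mu: the endomorphism of g1 with J_mu x \<bullet> x' = mu [x, x'].\<close>
definition Jmap :: "('a::euclidean_space \<Rightarrow> 'a \<Rightarrow> 'b) \<Rightarrow> ('b \<Rightarrow> real) \<Rightarrow> 'a \<Rightarrow> 'a" where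
  "Jmap br \<mu> x = (\<Sum>b\<in>Basis. \<mu> (br x b) *\<^sub>R b)"

definition Vspace :: "('a::euclidean_space \<Rightarrow> 'a \<Rightarrow> 'b::euclidean_space) \<Rightarrow> ('a \<Rightarrow> 'a) set" where
  "Vspace br = {Jmap br \<mu> | \<mu>. linear \<mu>}"

text \<open>Complex eigenvalues of a real linear endomorphism (eigenvalues of its complexification):
c is an eigenvalue iff f(z + i w) = c (z + i w) for some nonzero z + i w.\<close>
definition ceigenvalues :: "('a::real_vector \<Rightarrow> 'a) \<Rightarrow> complex set" where
  "ceigenvalues f = {c. \<exists>z w. (z \<noteq> 0 \<or> w \<noteq> 0) \<and>
      f z = Re c *\<^sub>R z - Im c *\<^sub>R w \<and> f w = Im c *\<^sub>R z + Re c *\<^sub>R w}"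

definition Vgen :: "('a::euclidean_space \<Rightarrow> 'a \<Rightarrow> 'b::euclidean_space) \<Rightarrow> ('a \<Rightarrow> 'a) set" where
  "Vgen br = {S \<in> Vspace br. \<forall>T \<in> Vspace br. card (ceigenvalues T) \<le> card (ceigenvalues S)}"

definition eigenvalues :: "('a::real_vector \<Rightarrow> 'a) \<Rightarrow> real set" where
  "eigenvalues f = {l. \<exists>x. x \<noteq> 0 \<and> f x = l *\<^sub>R x}"

definition eigenspace :: "('a::real_vector \<Rightarrow> 'a) \<Rightarrow> real \<Rightarrow> 'a set" where
  "eigenspace f l = {x. f x = l *\<^sub>R x}"

definition orth_proj :: "'a::euclidean_space set \<Rightarrow> 'a \<Rightarrow> 'a" where
  "orth_proj W e = (THE p. p \<in> W \<and> (\<forall>w\<in>W. (e - p) \<bullet> w = 0))"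

end

theory Submission imports Defs begin

definition skew :: "('a::euclidean_space \<Rightarrow> 'a) \<Rightarrow> bool" where
  "skew f \<longleftrightarrow> linear f \<and> (\<forall>x y. f x \<bullet> y = - (x \<bullet> f y))"

lemma quad_zero:
  fixes c1 c2 :: real
  assumes "\<And>s. 2 * s * c1 + s^2 *  c2 \<le> 0"
  shows "c1 = 0"
proof -
  define M where "M = \<bar>c2\<bar> + 1"
  have M: "M > 0" "2*M + c2 > 0" unfolding M_def by auto
  have "2*(c1/M)*c1 + (c1/M)^2*c2 \<le> 0" using assms .
  moreover have "(2*(c1/M)*c1 + (c1/M)^2*c2) = c1^2 * (2*M + c2) / M^2"
    using M by (simp add: field_simps power2_eq_square)
  ultimately have "c1^2 * (2*M + c2) / M^2 \<le> 0" by simp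
  hence "c1^2 * (2*M + c2) \<le> 0" using M by (simp add: divide_le_0_iff)
  hence "c1^2 \<le> 0" using M by (simp add: mult_le_0_iff)
  thus ?thesis by simp
qed

lemma sym_max_eig:
  fixes A :: "'a::euclidean_space \<Rightarrow> 'a"
  assumes lin: "linear A" and sym: "\<And>x y. A x \<bullet> y = x \<bullet> A y"
    and U: "subspace U" and inv: "\<And>x. x \<in> U \<Longrightarrow> A x \<in> U"
    and x1: "x1 \<in> U" "x1 \<noteq> 0"
  shows "\<exists>x0 l. x0 \<in> U \<and> norm x0 = 1 \<and> A x0 = l *\<^sub>R x0 \<and> (\<forall>x\<in>U. A x \<bullet> x \<le> l * (x \<bullet> x))"
proof -
  let ?C = "sphere 0 1 \<inter> U"
  have cC: "compact ?C" by (intro compact_Int_closed compact_sphere closed_subspace U)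
  have "x1 /\<^sub>R norm x1 \<in> ?C" using x1 U by (auto simp: subspace_scale)
  hence ne: "?C \<noteq> {}" by blast
  have bl: "bounded_linear A" using lin linear_conv_bounded_linear by auto
  have cont: "continuous_on ?C (\<lambda>x. A x \<bullet> x)"
    by (intro continuous_on_inner linear_continuous_on[OF bl] continuous_on_id)
  obtain x0 where x0: "x0 \<in> ?C" and mx: "\<And>y. y \<in> ?C \<Longrightarrow> A y \<bullet> y \<le> A x0 \<bullet> x0"
    using continuous_attains_sup[OF cC ne cont] by blast
  define l where "l = A x0 \<bullet> x0"
  have x0U: "x0 \<in> U" and nx0: "norm x0 = 1" using x0 by auto
  have x00: "x0 \<bullet> x0 = 1" using nx0 norm_eq_1 by blast
  have bound: "A x \<bullet> x \<le> l * (x \<bullet> x)" if "x \<in> U" for x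
  proof (cases "x = 0")
    case True thus ?thesis by (simp add: linear_0[OF lin])
  next
    case False
    let ?u = "x /\<^sub>R norm x"
    have "?u \<in> ?C" using that False U by (simp add: subspace_scale)
    hence "A ?u \<bullet> ?u \<le> l" using mx l_def by blast
    moreover have "A ?u \<bullet> ?u = (A x \<bullet> x) / (norm x)^2"
      using False by (simp add: linear_scale[OF lin] power2_eq_square field_simps)
    moreover have "x \<bullet> x = (norm x)^2" by (simp add: power2_norm_eq_inner)
    ultimately show ?thesis using False by (simp add: divide_le_eq mult.commute)
  qed
  have orth: "(A x0 - l *\<^sub>R x0) \<bullet> y = 0" if "y \<in> U" for y
  proof (rule quad_zero)
    fix s :: real
    have "x0 + s *\<^sub>R y \<in> U" using U x0U that by (simp add: subspace_add subspace_scale)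
    hence b: "A (x0 + s *\<^sub>R y) \<bullet> (x0 + s *\<^sub>R y) \<le> l * ((x0 + s *\<^sub>R y) \<bullet> (x0 + s *\<^sub>R y))"
      by (rule bound)
    have e1: "A (x0 + s *\<^sub>R y) \<bullet> (x0 + s *\<^sub>R y) = l + 2 * s * (A x0 \<bullet> y) + s^2 *  (A y \<bullet> y)"
    proof -
      have "A y \<bullet> x0 = A x0 \<bullet> y" using sym[of y x0] by (simp add: inner_commute)
      thus ?thesis
        by (simp add: linear_add[OF lin] linear_scale[OF lin] inner_add_left inner_add_right
            l_def power2_eq_square algebra_simps)
    qed
    have e2: "(x0 + s *\<^sub>R y) \<bullet> (x0 + s *\<^sub>R y) = 1 + 2 * s * (x0 \<bullet> y) + s^2 *  (y \<bullet> y)"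
      using x00 by (simp add: inner_add_left inner_add_right inner_commute power2_eq_square algebra_simps)
    show "2 * s * ((A x0 - l *\<^sub>R x0) \<bullet> y) + s\<^sup>2 * (A y \<bullet> y - l * (y \<bullet> y)) \<le> 0"
      using b unfolding e1 e2 by (simp add: inner_diff_left algebra_simps)
  qed
  have "A x0 - l *\<^sub>R x0 \<in> U" using U inv x0U by (simp add: subspace_diff subspace_scale)
  hence "(A x0 - l *\<^sub>R x0) \<bullet> (A x0 - l *\<^sub>R x0) = 0" by (rule orth)
  hence "A x0 = l *\<^sub>R x0" by simp
  thus ?thesis using x0U nx0 bound by blast
qed

lemma finite_eig_sym:
  fixes A :: "'a::euclidean_space \<Rightarrow> 'a"
  assumes sym: "\<And>x y. A x \<bullet> y = x \<bullet> A y"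
  shows "finite (eigenvalues A)"
proof -
  define v where "v l = (SOME x. x \<noteq> 0 \<and> A x = l *\<^sub>R x)" for l
  have v: "v l \<noteq> 0 \<and> A (v l) = l *\<^sub>R v l" if "l \<in> eigenvalues A" for l
    using that unfolding eigenvalues_def v_def by (metis (mono_tags, lifting) mem_Collect_eq someI_ex)
  have inj: "inj_on v (eigenvalues A)"
  proof (rule inj_onI)
    fix l m assume "l \<in> eigenvalues A" "m \<in> eigenvalues A" "v l = v m"
    then have "l *\<^sub>R v l = m *\<^sub>R v l" "v l \<noteq> 0" using v by metis+
    thus "l = m" by (simp add: scaleR_cancel_right)
  qed
  have po: "pairwise orthogonal (v ` eigenvalues A)"
    unfolding pairwise_def orthogonal_def
  proof (clarify)
    fix l m assume lm: "l \<in> eigenvalues A" "m \<in> eigenvalues A" "v l \<noteq> v m"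
    hence "l \<noteq> m" by auto
    have "l * (v l \<bullet> v m) = A (v l) \<bullet> v m" using v[OF lm(1)] by simp
    also have "\<dots> = v l \<bullet> A (v m)" by (rule sym)
    also have "\<dots> = m * (v l \<bullet> v m)" using v[OF lm(2)] by simp
    finally show "v l \<bullet> v m = 0" using \<open>l \<noteq> m\<close> by simp
  qed
  have "0 \<notin> v ` eigenvalues A" using v by auto
  hence "finite (v ` eigenvalues A)" using po pairwise_orthogonal_independent finiteI_independent by blast
  thus ?thesis using finite_imageD inj by blast
qed


fun pl :: "('a::real_vector \<Rightarrow> 'a) \<Rightarrow> real list \<Rightarrow> 'a \<Rightarrow> 'a" where
  "pl A [] x = x"
| "pl A (m # ms) x = A (pl A ms x) - m *\<^sub>R pl A ms x"

lemma pl_add: "linear A \<Longrightarrow> pl A ms (x + y) = pl A ms x + pl A ms y"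
  by (induction ms) (simp_all add: linear_add algebra_simps)

lemma pl_scale: "linear A \<Longrightarrow> pl A ms (c *\<^sub>R x) = c *\<^sub>R pl A ms x"
  by (induction ms) (simp_all add: linear_scale algebra_simps)

lemma pl_linear: "linear A \<Longrightarrow> linear (pl A ms)"
  by (rule linearI) (simp_all add: pl_add pl_scale)

lemma pl_comm: "linear A \<Longrightarrow> A (pl A ms x) = pl A ms (A x)"
  by (induction ms) (simp_all add: linear_diff linear_scale)

lemma pl_sym:
  assumes "linear A" "\<And>x y. A x \<bullet> y = x \<bullet> A y"
  shows "pl A ms x \<bullet> y = x \<bullet> pl A ms y"
proof (induction ms arbitrary: x y)
  case Nil thus ?case by simp
next
  case (Cons m ms)
  have "A (pl A ms x) \<bullet> y = pl A ms x \<bullet> A y" by (rule assms(2))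
  also have "\<dots> = x \<bullet> pl A ms (A y)" by (rule Cons)
  also have "\<dots> = x \<bullet> A (pl A ms y)" by (simp add: pl_comm assms(1))
  finally show ?case using Cons[of x y] by (simp add: inner_diff_left inner_diff_right)
qed

lemma pl_eig: "linear A \<Longrightarrow> A v = l *\<^sub>R v \<Longrightarrow> pl A ms v = (\<Prod>m\<leftarrow>ms. l - m) *\<^sub>R v"
  by (induction ms) (simp_all add: linear_scale algebra_simps)

lemma pl_span:
  assumes lin: "linear A"
  shows "(A ^^ length ms) x - pl A ms x \<in> span {(A ^^ k) x | k. k < length ms}"
proof (induction ms)
  case Nil thus ?case by (simp add: span_0)
next
  case (Cons m ms)
  let ?n = "length ms"
  let ?B = "\<lambda>n. {(A ^^ k) x | k. k < n}"
  have sub: "span (?B ?n) \<subseteq> span (?B (Suc ?n))" by (rule span_mono) auto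
  have img: "A ` span (?B ?n) \<subseteq> span (?B (Suc ?n))"
  proof -
    have "A ` ?B ?n \<subseteq> ?B (Suc ?n)"
    proof
      fix z assume "z \<in> A ` ?B ?n"
      then obtain k where "k < ?n" "z = A ((A ^^ k) x)" by auto
      hence "z = (A ^^ Suc k) x" "Suc k < Suc ?n" by auto
      thus "z \<in> ?B (Suc ?n)" by blast
    qed
    hence "span (A ` ?B ?n) \<subseteq> span (?B (Suc ?n))" by (rule span_mono)
    thus ?thesis using span_linear_image[OF lin] by metis
  qed
  have eq: "(A ^^ length (m # ms)) x - pl A (m # ms) x
      = A ((A ^^ ?n) x - pl A ms x) + m *\<^sub>R ((A ^^ ?n) x - ((A ^^ ?n) x - pl A ms x))"
    by (simp add: linear_diff[OF lin])
  have 1: "A ((A ^^ ?n) x - pl A ms x) \<in> span (?B (Suc ?n))" using img Cons by blast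
  have "(A ^^ ?n) x \<in> span (?B (Suc ?n))" by (rule span_base) auto
  hence 2: "(A ^^ ?n) x - ((A ^^ ?n) x - pl A ms x) \<in> span (?B (Suc ?n))"
    using sub Cons by (blast intro: span_diff)
  show ?case unfolding eq using 1 2 by (simp add: span_add span_scale)
qed

lemma pl_zero:
  fixes A :: "'a::euclidean_space \<Rightarrow> 'a"
  assumes lin: "linear A" and sym: "\<And>x y. A x \<bullet> y = x \<bullet> A y"
    and ms: "set ms = eigenvalues A"
  shows "pl A ms x = 0"
proof (rule ccontr)
  assume ne: "pl A ms x \<noteq> 0"
  let ?U = "range (pl A ms)"
  have U: "subspace ?U" by (intro linear_subspace_image pl_linear lin subspace_UNIV)
  have inv: "A z \<in> ?U" if "z \<in> ?U" for z using that pl_comm[OF lin] by auto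
  obtain x0 l where x0: "x0 \<in> ?U" "norm x0 = 1" "A x0 = l *\<^sub>R x0"
    using sym_max_eig[OF lin sym U inv, of "pl A ms x"] ne by blast
  have "x0 \<noteq> 0" using x0 by auto
  hence "l \<in> set ms" using x0 ms unfolding eigenvalues_def by auto
  hence "(\<Prod>m\<leftarrow>ms. l - m) = 0" by (simp add: prod_list_zero_iff)
  hence px0: "pl A ms x0 = 0" using pl_eig[OF lin x0(3)] by simp
  obtain z where z: "x0 = pl A ms z" using x0 by auto
  have "x0 \<bullet> x0 = z \<bullet> pl A ms x0" using pl_sym[OF lin sym] z by metis
  hence "x0 \<bullet> x0 = 0" using px0 by simp
  thus False using \<open>x0 \<noteq> 0\<close> by simp
qed

lemma skew_self: "skew S \<Longrightarrow> S x \<bullet> x = 0"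
  unfolding skew_def by (metis add.inverse_unique inner_commute add.commute diff_0 neg_equal_zero)

lemma skew_sym2: "skew S \<Longrightarrow> (S \<circ> S) x \<bullet> y = x \<bullet> (S \<circ> S) y"
  unfolding skew_def by simp

lemma skew_sq: "skew S \<Longrightarrow> S (S x) \<bullet> x = - (S x \<bullet> S x)"
  unfolding skew_def by simp

lemma skew_ceig:
  assumes sk: "skew S" and c: "c \<in> ceigenvalues S"
  shows "Re c = 0 \<and> - ((Im c) ^ 2) \<in> eigenvalues (S \<circ> S)"
proof -
  obtain z w where nz: "z \<noteq> 0 \<or> w \<noteq> 0" and
    z: "S z = Re c *\<^sub>R z - Im c *\<^sub>R w" and w: "S w = Im c *\<^sub>R z + Re c *\<^sub>R w"
    using c unfolding ceigenvalues_def by blast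
  have lin: "linear S" using sk skew_def by blast
  have "S z \<bullet> z = 0" "S w \<bullet> w = 0" using skew_self[OF sk] by auto
  hence "Re c * (z \<bullet> z) - Im c * (w \<bullet> z) = 0" "Im c * (z \<bullet> w) + Re c * (w \<bullet> w) = 0"
    unfolding z w by (simp_all add: inner_diff_left inner_add_left)
  hence "Re c * (z \<bullet> z + w \<bullet> w) = 0" by (simp add: inner_commute algebra_simps)
  moreover have "z \<bullet> z + w \<bullet> w > 0" using nz
    by (metis add_nonneg_pos add_pos_nonneg inner_gt_zero_iff inner_ge_zero)
  ultimately have re: "Re c = 0" by simp
  have "S (S z) = - ((Im c) ^ 2) *\<^sub>R z" "S (S w) = - ((Im c) ^ 2) *\<^sub>R w"
    using z w re by (simp_all add: linear_scale[OF lin] linear_diff[OF lin] linear_add[OF lin] linear_neg[OF lin] power2_eq_square)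
  hence "- ((Im c) ^ 2) \<in> eigenvalues (S \<circ> S)" using nz unfolding eigenvalues_def by auto
  thus ?thesis using re by simp
qed

lemma ceig_witness:
  assumes sk: "skew S" and lf: "linear f" and y: "y \<noteq> 0" and Sy: "S (S y) = - (b ^ 2) *\<^sub>R y"
    and f1: "f y = S y" and f2: "f (S y) = S (S y)"
  shows "Complex 0 b \<in> ceigenvalues f"
proof (cases "b = 0")
  case True
  have "S y \<bullet> S y = 0" using skew_sq[OF sk, of y] Sy True by simp
  hence "S y = 0" by simp
  hence "(y \<noteq> 0 \<or> (0::'a) \<noteq> 0) \<and> f y = Re (Complex 0 b) *\<^sub>R y - Im (Complex 0 b) *\<^sub>R 0
      \<and> f 0 = Im (Complex 0 b) *\<^sub>R y + Re (Complex 0 b) *\<^sub>R 0"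
    using y f1 True by (simp add: linear_0[OF lf])
  thus ?thesis unfolding ceigenvalues_def by blast
next
  case False
  show ?thesis unfolding ceigenvalues_def
    apply (simp, rule exI[of _ y], rule exI[of _ "- (1/b) *\<^sub>R S y"])
    using y False f1 f2 Sy by (simp add: linear_scale[OF lf] linear_neg[OF lf] power2_eq_square)
qed

lemma finite_ceig_skew:
  assumes sk: "skew S" shows "finite (ceigenvalues S)"
proof -
  let ?G = "eigenvalues (S \<circ> S)"
  have fin: "finite ?G" using finite_eig_sym skew_sym2[OF sk] by blast
  have "ceigenvalues S \<subseteq> (\<lambda>l. Complex 0 (sqrt (-l))) ` ?G \<union> (\<lambda>l. Complex 0 (- sqrt (-l))) ` ?G"
  proof
    fix c assume c: "c \<in> ceigenvalues S"
    have re: "Re c = 0" and g: "- ((Im c) ^ 2) \<in> ?G" using skew_ceig[OF sk c] by auto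
    have s: "sqrt (- (- ((Im c) ^ 2))) = \<bar>Im c\<bar>" by simp
    have "c = Complex 0 (sqrt (- (- ((Im c) ^ 2)))) \<or> c = Complex 0 (- sqrt (- (- ((Im c) ^ 2))))"
      unfolding s using re by (cases "Im c \<ge> 0") (auto intro: complex_eqI)
    thus "c \<in> (\<lambda>l. Complex 0 (sqrt (-l))) ` ?G \<union> (\<lambda>l. Complex 0 (- sqrt (-l))) ` ?G"
      using g by blast
  qed
  thus ?thesis using fin by (meson finite_UnI finite_imageI finite_subset)
qed


lemma Jmap_inner:
  assumes bl: "bilinear br" and mu: "linear \<mu>"
  shows "Jmap br \<mu> x \<bullet> y = \<mu> (br x y)"
proof -
  have lx: "linear (\<lambda>y. \<mu> (br x y))"
    using bl mu unfolding bilinear_def using linear_compose[of "br x" \<mu>] by (auto simp: o_def)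
  have "\<mu> (br x y) = \<mu> (br x (\<Sum>b\<in>Basis. (y \<bullet> b) *\<^sub>R b))" by (simp add: euclidean_representation)
  also have "\<dots> = (\<Sum>b\<in>Basis. (y \<bullet> b) * \<mu> (br x b))"
    using linear_sum[OF lx, of "\<lambda>b. (y \<bullet> b) *\<^sub>R b" Basis] linear_scale[OF lx] by simp
  also have "\<dots> = Jmap br \<mu> x \<bullet> y"
    unfolding Jmap_def inner_sum_left by (rule sum.cong) (simp_all add: inner_commute[of y])
  finally show ?thesis by simp
qed

lemma Jmap_linear:
  assumes bl: "bilinear br" and mu: "linear \<mu>"
  shows "linear (Jmap br \<mu>)"
proof -
  have lx: "linear (\<lambda>x. \<mu> (br x b))" for b
    using bl mu unfolding bilinear_def using linear_compose[of "\<lambda>x. br x b" \<mu>] by (auto simp: o_def)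
  have add: "\<mu> (br (x + z) b) = \<mu> (br x b) + \<mu> (br z b)" for x z b
    using linear_add[OF lx[of b]] .
  have sc: "\<mu> (br (c *\<^sub>R x) b) = c * \<mu> (br x b)" for c x b
    using linear_scale[OF lx[of b]] by simp
  show ?thesis
  proof (rule linearI)
    fix x z show "Jmap br \<mu> (x + z) = Jmap br \<mu> x + Jmap br \<mu> z"
      unfolding Jmap_def add by (simp only: scaleR_add_left sum.distrib)
  next
    fix c x show "Jmap br \<mu> (c *\<^sub>R x) = c *\<^sub>R Jmap br \<mu> x"
      unfolding Jmap_def sc by (simp only: scaleR_sum_right scaleR_scaleR)
  qed
qed

lemma Vspace_skew:
  assumes tb: "two_step_bracket br" and f: "f \<in> Vspace br"
  shows "skew f"
proof -
  obtain \<mu> where mu: "linear \<mu>" and fe: "f = Jmap br \<mu>" using f unfolding Vspace_def by blast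
  have bl: "bilinear br" and sk: "\<And>x y. br x y = - br y x" using tb unfolding two_step_bracket_def by blast+
  have "f x \<bullet> y = - (x \<bullet> f y)" for x y
  proof -
    have "f x \<bullet> y = \<mu> (br x y)" using Jmap_inner[OF bl mu] fe by simp
    also have "\<dots> = - \<mu> (br y x)" using sk[of x y] linear_neg[OF mu] by simp
    also have "\<dots> = - (f y \<bullet> x)" using Jmap_inner[OF bl mu] fe by simp
    finally show ?thesis by (simp add: inner_commute)
  qed
  thus ?thesis unfolding skew_def using Jmap_linear[OF bl mu] fe by simp
qed

lemma Vspace_comb:
  assumes tb: "two_step_bracket br" and f: "f \<in> Vspace br" and g: "g \<in> Vspace br"
  shows "(\<lambda>x. f x + t *\<^sub>R g x) \<in> Vspace br"
proof -
  obtain \<mu> where mu: "linear \<mu>" and fe: "f = Jmap br \<mu>" using f unfolding Vspace_def by blast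
  obtain \<nu> where nu: "linear \<nu>" and ge: "g = Jmap br \<nu>" using g unfolding Vspace_def by blast
  have l: "linear (\<lambda>y. \<mu> y + t * \<nu> y)"
    by (rule linearI) (simp_all add: linear_add[OF mu] linear_add[OF nu] linear_scale[OF mu]
        linear_scale[OF nu] algebra_simps)
  have "(\<lambda>x. f x + t *\<^sub>R g x) = Jmap br (\<lambda>y. \<mu> y + t * \<nu> y)"
    unfolding fe ge Jmap_def
    by (rule ext) (simp only: scaleR_add_left sum.distrib scaleR_sum_right scaleR_scaleR)
  thus ?thesis using l unfolding Vspace_def by blast
qed

lemma orth_proj_zero:
  assumes "0 \<in> W" "\<forall>w\<in>W. e \<bullet> w = 0"
  shows "orth_proj W e = 0"
  unfolding orth_proj_def
proof (rule the_equality)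
  show "0 \<in> W \<and> (\<forall>w\<in>W. (e - 0) \<bullet> w = 0)" using assms by simp
next
  fix p assume p: "p \<in> W \<and> (\<forall>w\<in>W. (e - p) \<bullet> w = 0)"
  hence "(e - p) \<bullet> p = 0" "e \<bullet> p = 0" using assms by auto
  hence "p \<bullet> p = 0" by (simp add: inner_diff_left)
  thus "p = 0" by simp
qed


lemma ab_rearr: "a + b = c + d \<Longrightarrow> a - c = d - (b::'a::ab_group_add)"
  by (metis add_diff_cancel_left add_diff_cancel_right' add_diff_eq diff_add_eq)

theorem lemma3p1:
  fixes br :: "'a::euclidean_space \<Rightarrow> 'a \<Rightarrow> 'b::euclidean_space"
    and S :: "'a \<Rightarrow> 'a" and e :: 'a
  assumes "two_step_bracket br"
    and "S \<in> Vgen br"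
    and "\<forall>l\<in>eigenvalues (S \<circ> S). orth_proj (eigenspace (S \<circ> S) l) e \<noteq> 0"
  shows "\<forall>T\<in>Vspace br.
           (\<forall>j < 2 * card (eigenvalues (S \<circ> S)). T ((S ^^ j) e) = 0) \<longrightarrow> T = (\<lambda>x. 0)"
proof (intro ballI impI)
  fix T assume TV: "T \<in> Vspace br"
    and Tz: "\<forall>j < 2 * card (eigenvalues (S \<circ> S)). T ((S ^^ j) e) = 0"
  have SV: "S \<in> Vspace br"
    and gen: "\<And>R. R \<in> Vspace br \<Longrightarrow> card (ceigenvalues R) \<le> card (ceigenvalues S)"
    using assms(2) unfolding Vgen_def by auto
  have sS: "skew S" and sT: "skew T" using Vspace_skew assms(1) SV TV by blast+
  have linS: "linear S" and linT: "linear T" using sS sT unfolding skew_def by auto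
  define A where "A = S \<circ> S"
  define G where "G = eigenvalues A"
  define N where "N = card G"
  have linA: "linear A" unfolding A_def using linS linear_compose by blast
  have symA: "\<And>x y. A x \<bullet> y = x \<bullet> A y" unfolding A_def using skew_sym2[OF sS] by blast
  have finG: "finite G" unfolding G_def using finite_eig_sym symA by blast
  define ms where "ms = sorted_list_of_set G"
  have ms: "set ms = G" "length ms = N" using finG unfolding ms_def N_def by auto
  have AN: "(A ^^ N) e \<in> span {(A ^^ k) e | k. k < N}"
  proof -
    have "pl A ms e = 0" using pl_zero[OF linA symA] ms(1) G_def by blast
    thus ?thesis using pl_span[OF linA, of ms e] ms(2) by simp
  qed
  have S2: "S ^^ 2 = A" unfolding A_def by (simp add: numeral_2_eq_2)
  have Apow: "A ^^ k = S ^^ (2 * k)" for k unfolding S2[symmetric] by (simp add: funpow_mult)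
  define K where "K = span {(S ^^ j) e | j. j < 2 * N}"
  have subK: "subspace K" unfolding K_def by simp
  have TK: "T x = 0" if "x \<in> K" for x
    using linear_eq_0_on_span[OF linT _ that[unfolded K_def]] Tz
    unfolding N_def G_def A_def by auto
  have SK: "S x \<in> K" if "x \<in> K" for x
  proof -
    have gens: "S ` {(S ^^ j) e | j. j < 2 * N} \<subseteq> K"
    proof
      fix z assume "z \<in> S ` {(S ^^ j) e | j. j < 2 * N}"
      then obtain j where j: "j < 2 * N" "z = (S ^^ Suc j) e" by auto
      show "z \<in> K"
      proof (cases "Suc j < 2 * N")
        case True thus ?thesis unfolding K_def using j by (auto intro!: span_base exI[of _ "Suc j"])
      next
        case False
        hence "Suc j = 2 * N" using j by simp
        hence "z = (A ^^ N) e" using j Apow by simp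
        moreover have "span {(A ^^ k) e | k. k < N} \<subseteq> K"
          unfolding K_def Apow by (rule span_mono) auto
        ultimately show ?thesis using AN by blast
      qed
    qed
    have "span (S ` {(S ^^ j) e | j. j < 2 * N}) \<subseteq> K" by (rule span_minimal[OF gens subK])
    hence "S ` K \<subseteq> K" unfolding K_def span_linear_image[OF linS] .
    thus ?thesis using that by blast
  qed
  have AK: "A x \<in> K" if "x \<in> K" for x using SK that unfolding A_def by simp
  define F where "F = ceigenvalues S"
  define St where "St t = (\<lambda>x. S x + t *\<^sub>R T x)" for t :: real
  have StV: "St t \<in> Vspace br" for t unfolding St_def by (rule Vspace_comb[OF assms(1) SV TV])
  have sSt: "skew (St t)" for t using Vspace_skew[OF assms(1) StV] .
  have linSt: "linear (St t)" for t using sSt skew_def by blast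
  have StK: "St t x = S x" if "x \<in> K" for t x using TK[OF that] unfolding St_def by simp
  have Fsub: "F \<subseteq> ceigenvalues (St t)" for t
  proof
    fix c assume c: "c \<in> F"
    have re: "Re c = 0" and l: "- ((Im c) ^ 2) \<in> G"
      using skew_ceig[OF sS c[unfolded F_def]] unfolding G_def A_def by auto
    let ?l = "- ((Im c) ^ 2)"
    have "N > 0" using l finG unfolding N_def by (auto simp: card_gt_0_iff)
    hence eK: "e \<in> K" unfolding K_def by (auto intro!: span_base exI[of _ 0])
    have "orth_proj (eigenspace A ?l) e \<noteq> 0" using assms(3) l unfolding G_def A_def by blast
    moreover have "0 \<in> eigenspace A ?l" unfolding eigenspace_def by (simp add: linear_0[OF linA])
    ultimately obtain v where v: "A v = ?l *\<^sub>R v" "e \<bullet> v \<noteq> 0"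
      using orth_proj_zero[of "eigenspace A ?l" e] unfolding eigenspace_def by blast
    obtain y z where y: "y \<in> K" and z: "\<And>w. w \<in> K \<Longrightarrow> orthogonal z w" and vyz: "v = y + z"
      using orthogonal_subspace_decomp_exists[of "{(S ^^ j) e | j. j < 2 * N}" v]
      unfolding K_def[symmetric] by blast
    have "A y - ?l *\<^sub>R y = ?l *\<^sub>R z - A z"
      using v(1) vyz by (intro ab_rearr) (simp add: linear_add[OF linA] scaleR_add_right)
    moreover have "A y - ?l *\<^sub>R y \<in> K" using AK[OF y] y subK by (simp add: subspace_add subspace_scale)
    moreover have "orthogonal (?l *\<^sub>R z - A z) w" if "w \<in> K" for w
    proof -
      have "A z \<bullet> w = z \<bullet> A w" by (rule symA)
      also have "\<dots> = 0" using z[OF AK[OF that]] unfolding orthogonal_def .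
      finally show ?thesis using z[OF that] unfolding orthogonal_def by (simp add: inner_diff_left)
    qed
    ultimately have "A y - ?l *\<^sub>R y = 0" unfolding orthogonal_def by (metis inner_eq_zero_iff)
    hence Ay: "S (S y) = - ((Im c) ^ 2) *\<^sub>R y" unfolding A_def by (simp add: add_eq_0_iff2)
    have "e \<bullet> z = 0" using z[OF eK] unfolding orthogonal_def by (simp add: inner_commute)
    hence "e \<bullet> y \<noteq> 0" using v(2) vyz by (simp add: inner_add_right)
    hence "y \<noteq> 0" by auto
    have "Complex 0 (Im c) \<in> ceigenvalues (St t)"
      by (rule ceig_witness[OF sS linSt \<open>y \<noteq> 0\<close> Ay StK[OF y] StK[OF SK[OF y]]])
    moreover have "Complex 0 (Im c) = c" using re by (simp add: complex_eqI)
    ultimately show "c \<in> ceigenvalues (St t)" by simp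
  qed
  have Feq: "ceigenvalues (St t) = F" for t
  proof -
    have "finite (ceigenvalues (St t))" by (rule finite_ceig_skew[OF sSt])
    moreover have "card (ceigenvalues (St t)) \<le> card F" unfolding F_def by (rule gen[OF StV])
    ultimately show ?thesis using Fsub[of t] card_seteq by blast
  qed
  have finF: "finite F" using Feq[of 0] finite_ceig_skew[OF sSt] by metis
  define R where "R = (\<Sum>c\<in>F. cmod c)"
  have R0: "R \<ge> 0" unfolding R_def by (simp add: sum_nonneg)
  have bnd: "norm (St t x) \<le> R * norm x" for t x
  proof -
    let ?f = "St t"
    let ?B = "\<lambda>x. - (?f (?f x))"
    have linB: "linear ?B" using linSt[of t] linear_compose[of ?f ?f] linear_compose_neg
      by (metis comp_apply ext linear_neg)
    have symB: "?B x \<bullet> y = x \<bullet> ?B y" for x y using skew_sym2[OF sSt[of t]] by simp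
    have Bx: "?B x \<bullet> x = ?f x \<bullet> ?f x" for x using skew_sq[OF sSt[of t]] by simp
    obtain b0 :: 'a where b0: "b0 \<in> Basis" using nonempty_Basis by blast
    hence "b0 \<noteq> 0" by auto
    then obtain x0 lam where x0: "norm x0 = 1" "?B x0 = lam *\<^sub>R x0"
      and mx: "\<And>x. ?B x \<bullet> x \<le> lam * (x \<bullet> x)"
      using sym_max_eig[OF linB symB subspace_UNIV, of b0] by auto
    have x00: "x0 \<bullet> x0 = 1" using x0 norm_eq_1 by blast
    have "lam = ?B x0 \<bullet> x0" using x0(2) x00 by simp
    hence lam0: "lam \<ge> 0" using Bx[of x0] by simp
    define b where "b = sqrt lam"
    have bb: "b ^ 2 = lam" unfolding b_def using lam0 by simp
    have "?f (?f x0) = - (b ^ 2) *\<^sub>R x0" using x0(2) bb by (simp add: minus_equation_iff)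
    moreover have "x0 \<noteq> 0" using x0 by auto
    ultimately have "Complex 0 b \<in> ceigenvalues ?f"
      using ceig_witness[OF sSt[of t] linSt[of t]] by blast
    hence "Complex 0 b \<in> F" using Feq by simp
    hence "cmod (Complex 0 b) \<le> R" unfolding R_def using finF
      by (intro member_le_sum) auto
    hence bR: "\<bar>b\<bar> \<le> R" by (simp add: cmod_def)
    have "(norm (?f x)) ^ 2 = ?B x \<bullet> x" using Bx by (simp add: power2_norm_eq_inner)
    also have "\<dots> \<le> lam * (x \<bullet> x)" by (rule mx)
    also have "\<dots> = (b * norm x) ^ 2" using bb by (simp add: power_mult_distrib power2_norm_eq_inner)
    also have "\<dots> \<le> (R * norm x) ^ 2"
    proof -
      have b0: "b \<ge> 0" unfolding b_def using lam0 by simp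
      hence "b \<le> R" using bR by simp
      hence "b * norm x \<le> R * norm x" by (simp add: mult_right_mono)
      thus ?thesis using b0 by (simp add: power_mono)
    qed
    finally have "(norm (?f x)) ^ 2 \<le> (R * norm x) ^ 2" .
    moreover have "0 \<le> R * norm x" using R0 by simp
    ultimately show ?thesis by (rule power2_le_imp_le)
  qed
  show "T = (\<lambda>x. 0)"
  proof (rule ext, rule ccontr)
    fix x assume nz: "T x \<noteq> 0"
    define t where "t = (norm (S x) + R * norm x + 1) / norm (T x)"
    have tn: "t * norm (T x) = norm (S x) + R * norm x + 1" unfolding t_def using nz by simp
    have "t \<ge> 0" unfolding t_def using R0 by simp
    hence "norm (t *\<^sub>R T x) = norm (S x) + R * norm x + 1" using tn by simp
    moreover have "norm (t *\<^sub>R T x) - norm (S x) \<le> norm (S x + t *\<^sub>R T x)"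
      using norm_diff_ineq[of "t *\<^sub>R T x" "S x"] by (simp add: add.commute)
    moreover have "norm (S x + t *\<^sub>R T x) \<le> R * norm x" using bnd[of t x] unfolding St_def .
    ultimately show False by linarith
  qed
qed

end
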